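(* For every integer $r\ge 2$, every real $c\ge \frac1{r-1}$ and every real $\epsilon>1/c$, there is a hereditary property $\mathcal H$ of $r$-uniform hypergraphs and an infinite set $S\subseteq\mathbb N$ such that $|\mathcal H_n|=n^{(r-1)(c+o(1))n}$ as $n\to\infty$ with $n\in S$, and such that $|\mathcal H_n|\ge 2^{n^{r-\epsilon}}$ for infinitely many $n$.
   Context: A hereditary property of $r$-uniform hypergraphs is a class of finite $r$-uniform hypergraphs closed under isomorphism and under taking induced subhypergraphs. $\mathcal H_n$ denotes the set of members of $\mathcal H$ with vertex set $[n]=\{1,\dots,n\}$. *)

theory Defs
  imports Complex_Main
begin

definition uniform_hg :: "nat \<Rightarrow> nat set \<Rightarrow> nat set set \<Rightarrow> bool" where
  "uniform_hg r V E \<longleftrightarrow> finite V \<and> (\<forall>e\<in>E. e \<subseteq> V \<and> card e = r)"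

definition hereditary_property :: "nat \<Rightarrow> (nat set \<times> nat set set) set \<Rightarrow> bool" where
  "hereditary_property r H \<longleftrightarrow>
     (\<forall>(V, E)\<in>H. uniform_hg r V E) \<and>
     (\<forall>V E V' f. (V, E) \<in> H \<longrightarrow> bij_betw f V V' \<longrightarrow> (V', (\<lambda>e. f ` e) ` E) \<in> H) \<and>
     (\<forall>V E U. (V, E) \<in> H \<longrightarrow> U \<subseteq> V \<longrightarrow> (U, {e\<in>E. e \<subseteq> U}) \<in> H)"

definition H_n :: "(nat set \<times> nat set set) set \<Rightarrow> nat \<Rightarrow> nat set set set" where
  "H_n H n = {E. ({1..n}, E) \<in> H}"

end

theory Submission
  imports Defs
begin

definition Hc :: "nat \<Rightarrow> real \<Rightarrow> nat set \<Rightarrow> (nat set \<times> nat set set) set" where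
  "Hc r c Q = {(V,E). uniform_hg r V E \<and>
     (\<forall>X. X \<subseteq> V \<longrightarrow> card X \<in> Q \<longrightarrow> real (card {e\<in>E. e \<subseteq> X}) \<le> c * real (card X))}"

lemma Hc_hereditary: "hereditary_property r (Hc r c Q)"
proof -
  have A: "(\<forall>(V, E)\<in>Hc r c Q. uniform_hg r V E)" by (auto simp: Hc_def)
  have B: "(V', (\<lambda>e. f ` e) ` E) \<in> Hc r c Q"
    if VE: "(V, E) \<in> Hc r c Q" and bij: "bij_betw f V V'" for V E V' f
  proof -
    have u: "uniform_hg r V E" and con: "\<And>X. X \<subseteq> V \<Longrightarrow> card X \<in> Q \<Longrightarrow> real (card {e\<in>E. e \<subseteq> X}) \<le> c * real (card X)"
      using VE by (auto simp: Hc_def)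
    have inj: "inj_on f V" and im: "f ` V = V'" using bij by (auto simp: bij_betw_def)
    have finV: "finite V" using u by (simp add: uniform_hg_def)
    have finE: "finite E" using u finV
      by (metis (no_types, lifting) Pow_iff finite_Pow_iff finite_subset subsetI uniform_hg_def)
    have u': "uniform_hg r V' ((\<lambda>e. f ` e) ` E)"
      unfolding uniform_hg_def
    proof (rule conjI; (intro ballI)?)
      show "finite V'" using finV im by blast
      fix e' assume "e' \<in> (\<lambda>e. f ` e) ` E"
      then obtain e where e: "e \<in> E" "e' = f ` e" by blast
      have "e \<subseteq> V" "card e = r" using u e by (auto simp: uniform_hg_def)
      then show "e' \<subseteq> V' \<and> card e' = r" using e im inj
        by (metis card_image image_mono inj_on_subset)
    qed
    have con': "real (card {e'\<in>(\<lambda>e. f ` e) ` E. e' \<subseteq> X'}) \<le> c * real (card X')"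
      if X': "X' \<subseteq> V'" "card X' \<in> Q" for X'
    proof -
      define X where "X = inv_into V f ` X'"
      have XV: "X \<subseteq> V" unfolding X_def using X' im by (auto intro: inv_into_into)
      have fX: "f ` X = X'" unfolding X_def using X' im
        by (metis image_inv_into_cancel)
      have cX: "card X = card X'" using fX XV inj by (metis card_image inj_on_subset)
      have sub: "{e'\<in>(\<lambda>e. f ` e) ` E. e' \<subseteq> X'} \<subseteq> (\<lambda>e. f ` e) ` {e\<in>E. e \<subseteq> X}"
      proof
        fix e' assume "e' \<in> {e'\<in>(\<lambda>e. f ` e) ` E. e' \<subseteq> X'}"
        then obtain e where e: "e \<in> E" "e' = f ` e" "f ` e \<subseteq> X'" by blast
        have eV: "e \<subseteq> V" using u e by (auto simp: uniform_hg_def)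
        have "e \<subseteq> X"
        proof
          fix x assume x: "x \<in> e"
          then have "f x \<in> f ` X" using e fX by auto
          then obtain y where "y \<in> X" "f x = f y" by auto
          then show "x \<in> X" using inj x eV XV by (metis inj_onD subsetD)
        qed
        then show "e' \<in> (\<lambda>e. f ` e) ` {e\<in>E. e \<subseteq> X}" using e by auto
      qed
      have "card {e'\<in>(\<lambda>e. f ` e) ` E. e' \<subseteq> X'} \<le> card ((\<lambda>e. f ` e) ` {e\<in>E. e \<subseteq> X})"
        using sub finE by (intro card_mono) auto
      also have "\<dots> \<le> card {e\<in>E. e \<subseteq> X}" using finE by (intro card_image_le) auto
      finally have "real (card {e'\<in>(\<lambda>e. f ` e) ` E. e' \<subseteq> X'}) \<le> real (card {e\<in>E. e \<subseteq> X})" by simp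
      also have "\<dots> \<le> c * real (card X)" using con[OF XV] X' cX by simp
      finally show ?thesis using cX by simp
    qed
    show ?thesis using u' con' by (auto simp: Hc_def)
  qed
  have C: "(U, {e\<in>E. e \<subseteq> U}) \<in> Hc r c Q"
    if VE: "(V, E) \<in> Hc r c Q" and UV: "U \<subseteq> V" for V E U
  proof -
    have u: "uniform_hg r V E" and con: "\<And>X. X \<subseteq> V \<Longrightarrow> card X \<in> Q \<Longrightarrow> real (card {e\<in>E. e \<subseteq> X}) \<le> c * real (card X)"
      using VE by (auto simp: Hc_def)
    have "uniform_hg r U {e\<in>E. e \<subseteq> U}" using u UV by (auto simp: uniform_hg_def intro: finite_subset)
    moreover have "{e\<in>{e\<in>E. e \<subseteq> U}. e \<subseteq> X} = {e\<in>E. e \<subseteq> X}" if "X \<subseteq> U" for X using that by auto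
    ultimately show ?thesis using con UV by (auto simp: Hc_def)
  qed
  show ?thesis unfolding hereditary_property_def using A B C by blast
qed

lemma binom_ratio:
  fixes t M N :: nat
  shows "t \<le> M \<Longrightarrow> M \<le> N \<Longrightarrow> real ((N - t) choose (M - t)) \<le> real (N choose M) * (real M / real N)^t"
proof (induction t)
  case 0 then show ?case by simp
next
  case (Suc t)
  have IH: "real ((N - t) choose (M - t)) \<le> real (N choose M) * (real M / real N)^t"
    using Suc by simp
  define a where "a = N - Suc t"
  define b where "b = M - Suc t"
  have aN: "N - t = Suc a" and bM: "M - t = Suc b" using Suc.prems unfolding a_def b_def by auto
  have eq: "real (Suc b) * real (Suc a choose Suc b) = real (Suc a) * real (a choose b)"
    using Suc_times_binomial[of b a] by (metis of_nat_mult)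
  have "real (a choose b) = real (Suc a choose Suc b) * (real (Suc b) / real (Suc a))"
    using eq by (simp add: field_simps)
  also have "\<dots> \<le> real (N choose M) * (real M / real N)^t * (real (Suc b) / real (Suc a))"
    using IH aN bM by (intro mult_right_mono) auto
  also have "real (Suc b) / real (Suc a) \<le> real M / real N"
  proof -
    have N0: "real N > 0" using Suc.prems by simp
    have "real (Suc b) * real N \<le> real M * real (Suc a)"
    proof -
      have eM: "real M = real (Suc b) + real t" and eN: "real N = real (Suc a) + real t"
        using aN bM Suc.prems by auto
      have "real b \<le> real a" using aN bM Suc.prems by simp
      moreover have "real (Suc b) * real N - real M * real (Suc a) = real t * (real b - real a)"
        unfolding eM eN by (simp add: algebra_simps)
      moreover have "real t * (real b - real a) \<le> 0"
        using \<open>real b \<le> real a\<close> by (simp add: mult_nonneg_nonpos)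
      ultimately show ?thesis by linarith
    qed
    then show ?thesis using N0 by (simp add: field_simps)
  qed
  then have "real (N choose M) * (real M / real N)^t * (real (Suc b) / real (Suc a))
      \<le> real (N choose M) * (real M / real N)^t * (real M / real N)"
    by (intro mult_left_mono) auto
  finally show ?case unfolding a_def b_def by (simp add: mult_ac)
qed

lemma sub_count:
  assumes fin: "finite A" and TA: "T \<subseteq> A" and cT: "card T = t" and MA: "M \<le> card A"
  shows "real (card {E. E \<subseteq> A \<and> card E = M \<and> T \<subseteq> E}) \<le> real (card A choose M) * (real M / real (card A))^t"
proof (cases "t \<le> M")
  case False
  have e0: "{E. E \<subseteq> A \<and> card E = M \<and> T \<subseteq> E} = {}"
  proof (intro equalityI subsetI)
    fix E assume "E \<in> {E. E \<subseteq> A \<and> card E = M \<and> T \<subseteq> E}"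
    then have "E \<subseteq> A" "card E = M" "T \<subseteq> E" by auto
    then have "card T \<le> M" using fin by (metis card_mono finite_subset)
    then show "E \<in> {}" using cT False by simp
  qed auto
  show ?thesis unfolding e0 by simp
next
  case True
  have finT: "finite T" using TA fin finite_subset by blast
  have inj: "inj_on (\<lambda>E. E - T) {E. E \<subseteq> A \<and> card E = M \<and> T \<subseteq> E}"
    by (intro inj_onI) auto
  have img: "(\<lambda>E. E - T) ` {E. E \<subseteq> A \<and> card E = M \<and> T \<subseteq> E} \<subseteq> {B. B \<subseteq> A - T \<and> card B = M - t}"
  proof
    fix B assume "B \<in> (\<lambda>E. E - T) ` {E. E \<subseteq> A \<and> card E = M \<and> T \<subseteq> E}"
    then obtain E where E: "E \<subseteq> A" "card E = M" "T \<subseteq> E" "B = E - T" by auto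
    have "card B = M - t" using E cT finT by (simp add: card_Diff_subset)
    then show "B \<in> {B. B \<subseteq> A - T \<and> card B = M - t}" using E by auto
  qed
  have "card {E. E \<subseteq> A \<and> card E = M \<and> T \<subseteq> E} \<le> card {B. B \<subseteq> A - T \<and> card B = M - t}"
    using card_inj_on_le[OF inj img] fin by simp
  also have "\<dots> = (card A - t) choose (M - t)"
    using n_subsets[of "A - T" "M - t"] fin TA cT finT by (simp add: card_Diff_subset)
  finally have "real (card {E. E \<subseteq> A \<and> card E = M \<and> T \<subseteq> E}) \<le> real ((card A - t) choose (M - t))"
    by simp
  also have "\<dots> \<le> real (card A choose M) * (real M / real (card A))^t"
    using binom_ratio True MA by blast
  finally show ?thesis .
qed

lemma exp_partial: "(\<Sum>j\<le>M. x^j / fact j) \<le> exp (x::real)" if "x \<ge> 0"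
proof -
  have s: "(\<lambda>n. x^n / fact n) sums exp x" using exp_converges[of x] by (simp add: divide_inverse mult.commute)
  show ?thesis using sum_le_suminf[OF sums_summable[OF s], of "{..M}"] sums_unique[OF s] that by auto
qed

lemma upper_sum:
  fixes M N :: nat
  assumes "1 \<le> M" "M \<le> N"
  shows "real (\<Sum>j\<le>M. N choose j) \<le> (exp 1 * real N / real M)^M"
proof -
  have M0: "real M > 0" using assms by simp
  have q1: "real N / real M \<ge> 1" using assms by simp
  have "real (\<Sum>j\<le>M. N choose j) = (\<Sum>j\<le>M. real (N choose j))" by simp
  also have "\<dots> \<le> (\<Sum>j\<le>M. (real N / real M)^M * (real M ^ j / fact j))"
  proof (intro sum_mono)
    fix j assume j: "j \<in> {..M}"
    have "real (N choose j) * fact j \<le> real N ^ j"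
      using binomial_fact_pow[of N j] by (metis of_nat_fact of_nat_le_iff of_nat_mult of_nat_power)
    then have "real (N choose j) \<le> real N ^ j / fact j" by (simp add: field_simps)
    also have "real N ^ j = (real N / real M)^j * real M ^ j" using M0 by (simp add: power_divide)
    also have "(real N / real M)^j \<le> (real N / real M)^M" using q1 j by (intro power_increasing) auto
    finally show "real (N choose j) \<le> (real N / real M)^M * (real M ^ j / fact j)"
      by (simp add: divide_right_mono mult_right_mono)
  qed
  also have "\<dots> = (real N / real M)^M * (\<Sum>j\<le>M. real M ^ j / fact j)" by (simp add: sum_distrib_left)
  also have "\<dots> \<le> (real N / real M)^M * exp (real M)"
    using exp_partial[of "real M" M] by (intro mult_left_mono) auto
  also have "exp (real M) = exp 1 ^ M" using exp_of_nat_mult[of M 1] by simp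
  also have "(real N / real M)^M * exp 1 ^ M = (exp 1 * real N / real M)^M"
  proof -
    have "exp 1 * real N / real M = exp 1 * (real N / real M)" by simp
    then show ?thesis by (simp only: power_mult_distrib mult.commute)
  qed
  finally show ?thesis .
qed

lemma choose_le_pow: "(n::nat) choose k \<le> n ^ k"
proof -
  have "(n choose k) * 1 \<le> (n choose k) * fact k" by (intro mult_le_mono2) (simp add: Suc_leI fact_gt_zero)
  then show ?thesis using binomial_fact_pow[of n k] by linarith
qed

locale sp =
  fixes r :: nat and c \<epsilon> :: real
  assumes r2: "r \<ge> 2" and cge: "c \<ge> 1 / (real r - 1)" and epsg: "\<epsilon> > 1 / c" and epsr: "\<epsilon> \<le> real r"
begin

lemma c_pos: "c > 0"
proof -
  have "1 / (real r - 1) > 0" using r2 by simp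
  then show ?thesis using cge by linarith
qed

lemma rc1: "(real r - 1) * c \<ge> 1"
proof -
  have "real r - 1 > 0" using r2 by simp
  then show ?thesis using cge by (simp add: field_simps)
qed

lemma eps_pos: "\<epsilon> > 0"
proof -
  have "1 / c > 0" using c_pos by simp
  then show ?thesis using epsg by linarith
qed

lemma epsc: "\<epsilon> * c > 1" using epsg c_pos by (simp add: field_simps)

definition tq :: "nat \<Rightarrow> nat" where "tq q = nat \<lfloor>c * real q\<rfloor> + 1"

lemma tq_gt: "real (tq q) > c * real q"
proof -
  have x0: "c * real q \<ge> 0" using c_pos by simp
  have e: "real (tq q) = real_of_int \<lfloor>c * real q\<rfloor> + 1" using x0 unfolding tq_def by simp
  have "c * real q < real_of_int \<lfloor>c * real q\<rfloor> + 1" by (rule real_of_int_floor_add_one_gt)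
  then show ?thesis unfolding e .
qed

lemma le_iff_tq: "real k \<le> c * real q \<longleftrightarrow> k < tq q"
proof -
  have "c * real q \<ge> 0" using c_pos by simp
  show ?thesis
  proof
    assume "real k \<le> c * real q"
    then have "k \<le> nat \<lfloor>c * real q\<rfloor>" by (rule le_nat_floor)
    then show "k < tq q" unfolding tq_def by simp
  next
    assume "k < tq q"
    then have "k \<le> nat \<lfloor>c * real q\<rfloor>" unfolding tq_def by simp
    then have "real k \<le> real (nat \<lfloor>c * real q\<rfloor>)" by simp
    also have "\<dots> \<le> c * real q" using of_nat_floor \<open>c * real q \<ge> 0\<close> by blast
    finally show "real k \<le> c * real q" .
  qed
qed

lemma tq_alpha:
  assumes "\<alpha> * c \<ge> 1" "\<alpha> > 0"
  shows "real q < \<alpha> * real (tq q)"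
proof -
  have "\<alpha> * real (tq q) > \<alpha> * (c * real q)" using tq_gt assms(2) by simp
  moreover have "\<alpha> * (c * real q) \<ge> real q"
  proof -
    have "(\<alpha> * c) * real q \<ge> 1 * real q" using assms(1) by (intro mult_right_mono) auto
    then show ?thesis by (simp add: mult.assoc)
  qed
  ultimately show ?thesis by linarith
qed

definition Kr :: "nat \<Rightarrow> nat set set" where "Kr n = {e. e \<subseteq> {1..n} \<and> card e = r}"

lemma Kr_fin: "finite (Kr n)" unfolding Kr_def by (rule finite_subset[of _ "Pow {1..n}"]) auto
lemma Kr_card: "card (Kr n) = n choose r" unfolding Kr_def using n_subsets[of "{1..n}" r] by simp

definition badsum :: "nat set \<Rightarrow> nat \<Rightarrow> nat \<Rightarrow> real" where
  "badsum F n M = (\<Sum>q\<in>F. real (n choose q) * real (q choose r) ^ tq q * (real M / real (n choose r)) ^ tq q)"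

definition Good :: "nat \<Rightarrow> nat set \<Rightarrow> nat \<Rightarrow> nat set set set" where
  "Good n F M = {E. E \<subseteq> Kr n \<and> card E = M \<and>
     (\<forall>X. X \<subseteq> {1..n} \<longrightarrow> card X \<in> F \<longrightarrow> real (card {e\<in>E. e \<subseteq> X}) \<le> c * real (card X))}"

lemma good_count:
  assumes finF: "finite F" and M1: "1 \<le> M" and MN: "M \<le> n choose r" and bs: "badsum F n M \<le> 1/2"
  shows "real (card (Good n F M)) \<ge> real ((n choose r) choose M) / 2"
proof -
  define A where "A = Kr n"
  define N where "N = n choose r"
  have finA: "finite A" and cA: "card A = N" unfolding A_def N_def using Kr_fin Kr_card by auto
  define All where "All = {E. E \<subseteq> A \<and> card E = M}"
  have cAll: "card All = N choose M" unfolding All_def using n_subsets[OF finA, of M] cA by simp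
  define Xs where "Xs q = {X. X \<subseteq> {1..n} \<and> card X = q}" for q
  define Ts where "Ts X q = {T. T \<subseteq> {e\<in>A. e \<subseteq> X} \<and> card T = tq q}" for X q
  define Bad where "Bad = (\<Union>q\<in>F. \<Union>X\<in>Xs q. \<Union>T\<in>Ts X q. {E. E \<subseteq> A \<and> card E = M \<and> T \<subseteq> E})"
  have finXs: "finite (Xs q)" for q unfolding Xs_def by (rule finite_subset[of _ "Pow {1..n}"]) auto
  have finTs: "finite (Ts X q)" for X q unfolding Ts_def
    by (rule finite_subset[of _ "Pow A"]) (use finA in auto)
  have cXs: "card (Xs q) = n choose q" for q unfolding Xs_def using n_subsets[of "{1..n}" q] by simp
  have cB: "card {e\<in>A. e \<subseteq> X} = q choose r" if "X \<in> Xs q" for X q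
  proof -
    have "{e\<in>A. e \<subseteq> X} = {e. e \<subseteq> X \<and> card e = r}" using that unfolding A_def Kr_def Xs_def by auto
    moreover have "finite X" using that unfolding Xs_def by (auto intro: finite_subset)
    ultimately show ?thesis using n_subsets[of X r] that unfolding Xs_def by simp
  qed
  have finB: "finite {e\<in>A. e \<subseteq> X}" for X using finA by simp
  have cTs: "real (card (Ts X q)) \<le> real (q choose r) ^ tq q" if "X \<in> Xs q" for X q
  proof -
    have "card (Ts X q) = (q choose r) choose tq q" unfolding Ts_def using n_subsets[OF finB[of X], of "tq q"] cB[OF that] by simp
    also have "\<dots> \<le> (q choose r) ^ tq q" by (rule choose_le_pow)
    finally show ?thesis by (metis of_nat_le_iff of_nat_power)
  qed
  have sub: "All - Bad \<subseteq> Good n F M"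
  proof
    fix E assume E: "E \<in> All - Bad"
    then have EA: "E \<subseteq> A" "card E = M" unfolding All_def by auto
    show "E \<in> Good n F M"
    proof (rule ccontr)
      assume "E \<notin> Good n F M"
      then obtain X where X: "X \<subseteq> {1..n}" "card X \<in> F" "\<not> real (card {e\<in>E. e \<subseteq> X}) \<le> c * real (card X)"
        using EA unfolding Good_def A_def by auto
      define q where "q = card X"
      have "tq q \<le> card {e\<in>E. e \<subseteq> X}" using X(3) le_iff_tq unfolding q_def by (meson not_le)
      then obtain T where T: "T \<subseteq> {e\<in>E. e \<subseteq> X}" "card T = tq q" by (meson obtain_subset_with_card_n)
      have "X \<in> Xs q" unfolding Xs_def q_def using X by auto
      moreover have "T \<in> Ts X q" unfolding Ts_def using T EA by auto
      ultimately have "E \<in> Bad" unfolding Bad_def using X(2) T EA unfolding q_def by blast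
      then show False using E by auto
    qed
  qed
  have finGood: "finite (Good n F M)" unfolding Good_def
    by (rule finite_subset[of _ "Pow A"]) (use finA A_def in auto)
  have "card (All - Bad) \<le> card (Good n F M)" using card_mono[OF finGood sub] .
  moreover have finBad: "finite Bad"
  proof (rule finite_subset[of _ "Pow A"])
    show "Bad \<subseteq> Pow A" unfolding Bad_def by blast
  qed (use finA in simp)
  ultimately have "card All - card Bad \<le> card (Good n F M)"
    using diff_card_le_card_Diff[OF finBad, of All] by linarith
  then have G: "real (card All) - real (card Bad) \<le> real (card (Good n F M))" by linarith
  have eachT: "real (card {E. E \<subseteq> A \<and> card E = M \<and> T \<subseteq> E}) \<le> real (N choose M) * (real M / real N) ^ tq q"
    if "T \<in> Ts X q" for T X q
  proof -
    have "T \<subseteq> A" "card T = tq q" using that unfolding Ts_def by auto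
    then show ?thesis using sub_count[OF finA, of T "tq q" M] MN cA N_def by simp
  qed
  have "real (card Bad) \<le> (\<Sum>q\<in>F. \<Sum>X\<in>Xs q. \<Sum>T\<in>Ts X q. real (card {E. E \<subseteq> A \<and> card E = M \<and> T \<subseteq> E}))"
  proof -
    have "card Bad \<le> (\<Sum>q\<in>F. card (\<Union>X\<in>Xs q. \<Union>T\<in>Ts X q. {E. E \<subseteq> A \<and> card E = M \<and> T \<subseteq> E}))"
      unfolding Bad_def by (rule card_UN_le[OF finF])
    also have "\<dots> \<le> (\<Sum>q\<in>F. \<Sum>X\<in>Xs q. card (\<Union>T\<in>Ts X q. {E. E \<subseteq> A \<and> card E = M \<and> T \<subseteq> E}))"
      by (intro sum_mono card_UN_le finXs)
    also have "\<dots> \<le> (\<Sum>q\<in>F. \<Sum>X\<in>Xs q. \<Sum>T\<in>Ts X q. card {E. E \<subseteq> A \<and> card E = M \<and> T \<subseteq> E})"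
      by (intro sum_mono card_UN_le finTs)
    finally have "real (card Bad) \<le> real (\<Sum>q\<in>F. \<Sum>X\<in>Xs q. \<Sum>T\<in>Ts X q. card {E. E \<subseteq> A \<and> card E = M \<and> T \<subseteq> E})"
      by (simp only: of_nat_le_iff)
    then show ?thesis by simp
  qed
  also have "\<dots> \<le> (\<Sum>q\<in>F. \<Sum>X\<in>Xs q. \<Sum>T\<in>Ts X q. real (N choose M) * (real M / real N) ^ tq q)"
    by (intro sum_mono eachT) auto
  also have "\<dots> \<le> (\<Sum>q\<in>F. \<Sum>X\<in>Xs q. real (q choose r) ^ tq q * (real (N choose M) * (real M / real N) ^ tq q))"
  proof (intro sum_mono)
    fix q X assume "q \<in> F" "X \<in> Xs q"
    then show "(\<Sum>T\<in>Ts X q. real (N choose M) * (real M / real N) ^ tq q)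
         \<le> real (q choose r) ^ tq q * (real (N choose M) * (real M / real N) ^ tq q)"
      using cTs by (simp add: mult_right_mono)
  qed
  also have "\<dots> = (\<Sum>q\<in>F. real (n choose q) * (real (q choose r) ^ tq q * (real (N choose M) * (real M / real N) ^ tq q)))"
    using cXs by simp
  also have "\<dots> = real (N choose M) * badsum F n M"
    unfolding badsum_def N_def by (simp add: sum_distrib_left mult_ac)
  also have "\<dots> \<le> real (N choose M) * (1/2)" using bs by (intro mult_left_mono) auto
  finally have "real (card Bad) \<le> real (N choose M) / 2" by simp
  then have "real (card Bad) \<le> real ((n choose r) choose M) / 2" unfolding N_def .
  moreover have "real (card All) = real ((n choose r) choose M)" using cAll N_def by simp
  ultimately show ?thesis using G by linarith
qed

end

context sp begin

lemma badsum_ev: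
  assumes finF: "finite F" and \<alpha>: "\<alpha> > 0" and \<alpha>q: "\<forall>q\<in>F. real q < \<alpha> * real (tq q)" and D: "D > 0"
  shows "\<forall>\<^sub>F n in sequentially. \<forall>M. real M \<le> D * real n powr (real r - \<alpha>) \<longrightarrow> badsum F n M \<le> 1/2"
proof -
  define K where "K q = real (q choose r) ^ tq q * (D * real r ^ r) ^ tq q" for q
  define e where "e q = real q - \<alpha> * real (tq q)" for q
  have lim: "((\<lambda>n. \<Sum>q\<in>F. K q * real n powr e q) \<longlongrightarrow> 0) sequentially"
  proof (rule tendsto_null_sum)
    fix q assume "q \<in> F"
    then have "e q < 0" using \<alpha>q unfolding e_def by auto
    then have "((\<lambda>n. real n powr e q) \<longlongrightarrow> 0) sequentially"
      by (rule tendsto_neg_powr[OF _ filterlim_real_sequentially])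
    then show "((\<lambda>n. K q * real n powr e q) \<longlongrightarrow> 0) sequentially"
      using tendsto_mult[OF tendsto_const[of "K q"]] by fastforce
  qed
  have ev1: "\<forall>\<^sub>F n in sequentially. (\<Sum>q\<in>F. K q * real n powr e q) < 1/2"
    using order_tendstoD(2)[OF lim, of "1/2"] by simp
  have ev2: "\<forall>\<^sub>F n in sequentially. max r 1 \<le> n" by (rule eventually_ge_at_top)
  show ?thesis using ev1 ev2
  proof eventually_elim
    case (elim n)
    have rn: "r \<le> n" and n1: "1 \<le> n" using elim by auto
    have npos: "real n > 0" using n1 by simp
    have rpos: "real r > 0" using r2 by simp
    define N where "N = real (n choose r)"
    have Nge: "N \<ge> (real n / real r) ^ r" unfolding N_def using binomial_ge_n_over_k_pow_k[OF rn] by simp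
    have nr: "(real n / real r) ^ r = real n powr real r / real r ^ r"
      using npos by (simp add: power_divide powr_realpow)
    have Npos: "N > 0" using Nge nr npos rpos
      by (smt (verit, best) divide_pos_pos powr_gt_zero zero_less_power)
    show ?case
    proof (intro allI impI)
      fix M assume MD: "real M \<le> D * real n powr (real r - \<alpha>)"
      have xb: "real M / N \<le> D * real r ^ r * real n powr (- \<alpha>)"
      proof -
        have "real M / N \<le> D * real n powr (real r - \<alpha>) / N" using MD Npos by (simp add: divide_right_mono)
        also have "\<dots> \<le> D * real n powr (real r - \<alpha>) / (real n powr real r / real r ^ r)"
        proof (rule divide_left_mono)
          show "real n powr real r / real r ^ r \<le> N" using Nge nr by simp
          show "0 \<le> D * real n powr (real r - \<alpha>)" using D by simp
          have "real n powr real r / real r ^ r > 0" using npos rpos by simp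
          then show "0 < N * (real n powr real r / real r ^ r)" using Npos by (rule mult_pos_pos[rotated])
        qed
        also have "\<dots> = D * real r ^ r * (real n powr (real r - \<alpha>) / real n powr real r)"
          using rpos by (simp add: field_simps)
        also have "real n powr (real r - \<alpha>) / real n powr real r = real n powr (- \<alpha>)"
          using npos by (simp add: powr_diff[symmetric])
        finally show ?thesis .
      qed
      have "badsum F n M \<le> (\<Sum>q\<in>F. K q * real n powr e q)"
        unfolding badsum_def N_def[symmetric]
      proof (intro sum_mono)
        fix q assume "q \<in> F"
        have b1: "real (n choose q) \<le> real n powr real q"
        proof -
          have "real (n choose q) \<le> real (n ^ q)" using choose_le_pow[of n q] by (simp only: of_nat_le_iff)
          then show ?thesis using npos by (simp add: powr_realpow)
        qed
        have b2: "(real M / N) ^ tq q \<le> (D * real r ^ r) ^ tq q * real n powr (- \<alpha> * real (tq q))"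
        proof -
          have "(real M / N) ^ tq q \<le> (D * real r ^ r * real n powr (- \<alpha>)) ^ tq q"
            using xb Npos by (intro power_mono) auto
          also have "\<dots> = (D * real r ^ r) ^ tq q * (real n powr (- \<alpha>)) ^ tq q" by (simp add: power_mult_distrib)
          also have "(real n powr (- \<alpha>)) ^ tq q = real n powr (- \<alpha> * real (tq q))"
            using npos by (simp add: powr_realpow[symmetric] powr_powr)
          finally show ?thesis .
        qed
        have "real (n choose q) * real (q choose r) ^ tq q * (real M / N) ^ tq q
            \<le> real n powr real q * real (q choose r) ^ tq q * ((D * real r ^ r) ^ tq q * real n powr (- \<alpha> * real (tq q)))"
          using b1 b2 Npos by (intro mult_mono) auto
        also have "\<dots> = K q * (real n powr real q * real n powr (- \<alpha> * real (tq q)))"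
          unfolding K_def by (simp add: mult_ac)
        also have "real n powr real q * real n powr (- \<alpha> * real (tq q)) = real n powr e q"
          unfolding e_def by (simp add: powr_add[symmetric])
        finally show "real (n choose q) * real (q choose r) ^ tq q * (real M / N) ^ tq q \<le> K q * real n powr e q" .
      qed
      then show "badsum F n M \<le> 1/2" using elim by linarith
    qed
  qed
qed

lemma ev_real_ge: "\<forall>\<^sub>F n in sequentially. real n \<ge> T"
  using filterlim_real_sequentially unfolding filterlim_at_top by blast

definition Mm :: "nat \<Rightarrow> nat" where "Mm n = nat \<lfloor>c * real n\<rfloor>"
definition Mb :: "nat \<Rightarrow> nat" where "Mb n = nat \<lceil>real n powr (real r - \<epsilon>)\<rceil>"

definition Pm :: "nat set \<Rightarrow> nat \<Rightarrow> bool" where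
  "Pm F n = (r \<le> n \<and> 1 \<le> Mm n \<and> Mm n \<le> n choose r \<and> badsum F n (Mm n) \<le> 1/2)"
definition Pb :: "nat set \<Rightarrow> nat \<Rightarrow> bool" where
  "Pb F n = (r \<le> n \<and> 1 \<le> Mb n \<and> 4 * Mb n \<le> n choose r \<and> badsum F n (Mb n) \<le> 1/2)"

lemma Mm_le: "real (Mm n) \<le> c * real n"
  unfolding Mm_def using c_pos by (intro of_nat_floor) simp

lemma binom_lower:
  assumes "r \<le> n" shows "real (n choose r) \<ge> real n powr real r / real r ^ r"
proof -
  have rpos: "real r > 0" using r2 by simp
  have "(real n / real r) ^ r \<le> real (n choose r)" using binomial_ge_n_over_k_pow_k[OF assms] by simp
  moreover have "(real n / real r) ^ r = real n powr real r / real r ^ r"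
  proof (cases "n = 0")
    case True then show ?thesis using r2 by simp
  next
    case False then show ?thesis by (simp add: power_divide powr_realpow)
  qed
  ultimately show ?thesis by simp
qed

lemma Pm_ev: assumes "finite F" shows "\<forall>\<^sub>F n in sequentially. Pm F n"
proof -
  have a1: "real r - 1 > 0" using r2 by simp
  have ev_bs: "\<forall>\<^sub>F n in sequentially. \<forall>M. real M \<le> c * real n powr (real r - (real r - 1)) \<longrightarrow> badsum F n M \<le> 1/2"
    using tq_alpha[of "real r - 1"] rc1 a1 c_pos by (intro badsum_ev assms) (auto simp: mult.commute)
  have ev_r: "\<forall>\<^sub>F n in sequentially. r \<le> n" by (rule eventually_ge_at_top)
  have ev_c: "\<forall>\<^sub>F n in sequentially. real n \<ge> 1 / c" by (rule ev_real_ge)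
  have ev_c2: "\<forall>\<^sub>F n in sequentially. real n \<ge> c * real r ^ 2" by (rule ev_real_ge)
  show ?thesis using ev_bs ev_r ev_c ev_c2
  proof eventually_elim
    case (elim n)
    have rpos: "real r > 0" using r2 by simp
    have n0: "real n > 0" using elim rpos r2 by simp
    have "c * real n \<ge> 1" using elim(3) c_pos by (simp add: field_simps)
    then have M1: "1 \<le> Mm n" unfolding Mm_def by (simp add: le_nat_floor)
    have "real (Mm n) \<le> c * real n" by (rule Mm_le)
    also have "c * real n \<le> (real n / real r) ^ 2"
    proof -
      have "c * real r ^ 2 * real n \<le> real n * real n" using elim(4) n0 by (intro mult_right_mono) auto
      then show ?thesis using rpos by (simp add: field_simps power2_eq_square)
    qed
    also have "(real n / real r) ^ 2 \<le> (real n / real r) ^ r"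
      using elim(2) r2 rpos by (intro power_increasing) auto
    also have "\<dots> \<le> real (n choose r)" using binomial_ge_n_over_k_pow_k[OF elim(2)] by simp
    finally have MN: "Mm n \<le> n choose r" by (simp only: of_nat_le_iff)
    have "real n powr (real r - (real r - 1)) = real n" using n0 by simp
    then have "badsum F n (Mm n) \<le> 1/2" using elim(1) Mm_le[of n] by simp
    then show ?case unfolding Pm_def using elim(2) M1 MN by simp
  qed
qed

lemma Pb_ev: assumes "finite F" shows "\<forall>\<^sub>F n in sequentially. Pb F n"
proof -
  have ev_bs: "\<forall>\<^sub>F n in sequentially. \<forall>M. real M \<le> 2 * real n powr (real r - \<epsilon>) \<longrightarrow> badsum F n M \<le> 1/2"
    using tq_alpha[of \<epsilon>] epsc eps_pos by (intro badsum_ev assms) auto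
  have ev_r: "\<forall>\<^sub>F n in sequentially. max r 1 \<le> n" by (rule eventually_ge_at_top)
  define T where "T = (8 * real r ^ r) powr (1 / \<epsilon>)"
  have ev_T: "\<forall>\<^sub>F n in sequentially. real n \<ge> T" by (rule ev_real_ge)
  show ?thesis using ev_bs ev_r ev_T
  proof eventually_elim
    case (elim n)
    have rpos: "real r > 0" using r2 by simp
    have rn: "r \<le> n" and n1: "1 \<le> n" using elim by auto
    have n0: "real n > 0" using n1 by simp
    define y where "y = real n powr (real r - \<epsilon>)"
    have y1: "y \<ge> 1" unfolding y_def using n1 epsr by (intro ge_one_powr_ge_zero) auto
    have My: "real (Mb n) \<le> y + 1"
    proof -
      have "real (Mb n) = real_of_int \<lceil>y\<rceil>" unfolding Mb_def y_def[symmetric] using y1 by simp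
      also have "\<dots> \<le> y + 1" by (rule of_int_ceiling_le_add_one)
      finally show ?thesis .
    qed
    have My2: "real (Mb n) \<le> 2 * y" using My y1 by linarith
    have M1: "1 \<le> Mb n"
    proof -
      have "real_of_int \<lceil>y\<rceil> \<ge> y" by (rule le_of_int_ceiling)
      then have "\<lceil>y\<rceil> \<ge> 1" using y1 by linarith
      then have "nat \<lceil>y\<rceil> \<ge> nat 1" by (rule nat_mono)
      then show ?thesis unfolding Mb_def y_def[symmetric] by simp
    qed
    have Tpos: "T > 0" unfolding T_def using rpos by simp
    have ne: "real n powr \<epsilon> \<ge> 8 * real r ^ r"
    proof -
      have "real n powr \<epsilon> \<ge> T powr \<epsilon>" using elim(3) Tpos eps_pos by (intro powr_mono2) auto
      also have "T powr \<epsilon> = 8 * real r ^ r" unfolding T_def using eps_pos rpos by (simp add: powr_powr)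
      finally show ?thesis .
    qed
    have "real (4 * Mb n) \<le> 8 * y" using My2 by simp
    also have "8 * y = 8 * real n powr real r / real n powr \<epsilon>" unfolding y_def by (simp add: powr_diff)
    also have "\<dots> \<le> 8 * real n powr real r / (8 * real r ^ r)"
      using ne rpos n0 by (intro divide_left_mono) auto
    also have "\<dots> = real n powr real r / real r ^ r" by simp
    also have "\<dots> \<le> real (n choose r)" by (rule binom_lower[OF rn])
    finally have MN: "4 * Mb n \<le> n choose r" by (simp only: of_nat_le_iff)
    have "badsum F n (Mb n) \<le> 1/2" using elim(1) My2 unfolding y_def by simp
    then show ?case unfolding Pb_def using rn M1 MN by simp
  qed
qed

end

context sp begin

lemma ex_after: assumes "\<forall>\<^sub>F n in sequentially. P n" shows "\<exists>n>m. P n"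
proof -
  obtain N where "\<forall>n\<ge>N. P n" using assms unfolding eventually_sequentially by blast
  then show ?thesis by (intro exI[of _ "max N (Suc m)"]) auto
qed

definition bsc :: "nat set \<Rightarrow> nat" where "bsc F = (SOME n. Max F < n \<and> Pb F n)"
definition nxt :: "nat set \<Rightarrow> nat" where "nxt F = (SOME n. bsc F < n \<and> Pm F n)"

lemma bsc_prop: assumes "finite F" shows "Max F < bsc F \<and> Pb F (bsc F)"
  unfolding bsc_def by (rule someI_ex) (rule ex_after[OF Pb_ev[OF assms]])

lemma nxt_prop: assumes "finite F" shows "bsc F < nxt F \<and> Pm F (nxt F)"
  unfolding nxt_def by (rule someI_ex) (rule ex_after[OF Pm_ev[OF assms]])

primrec Fs :: "nat \<Rightarrow> nat set" where
  "Fs 0 = {0}"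
| "Fs (Suc k) = insert (nxt (Fs k)) (Fs k)"

definition Q :: "nat set" where "Q = (\<Union>k. Fs k)"
definition S :: "nat set" where "S = range (\<lambda>k. nxt (Fs k))"

lemma Fs_fin: "finite (Fs k)" by (induction k) auto
lemma Fs_ne: "Fs k \<noteq> {}" by (induction k) auto

lemma Fs_mono: "k \<le> j \<Longrightarrow> Fs k \<subseteq> Fs j"
proof (induction j)
  case 0 then show ?case by simp
next
  case (Suc j) then show ?case by (cases "k = Suc j") auto
qed

lemma Max_lt_nxt: "Max (Fs k) < nxt (Fs k)"
  using bsc_prop[OF Fs_fin[of k]] nxt_prop[OF Fs_fin[of k]] by linarith

lemma Max_Fs_Suc: "Max (Fs (Suc k)) = nxt (Fs k)"
proof -
  have "Max (insert (nxt (Fs k)) (Fs k)) = max (nxt (Fs k)) (Max (Fs k))"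
    using Fs_fin[of k] Fs_ne[of k] by (rule Max_insert)
  then show ?thesis using Max_lt_nxt[of k] by simp
qed

lemma nxt_mono: "k < j \<Longrightarrow> nxt (Fs k) < nxt (Fs j)"
proof -
  assume "k < j"
  then have "Fs (Suc k) \<subseteq> Fs j" by (intro Fs_mono) simp
  then have "Max (Fs (Suc k)) \<le> Max (Fs j)" using Fs_fin Fs_ne by (intro Max_mono) auto
  then show ?thesis using Max_Fs_Suc[of k] Max_lt_nxt[of j] by linarith
qed

lemma Fs_split: "q \<in> Fs j \<Longrightarrow> q \<in> Fs k \<or> nxt (Fs k) \<le> q"
proof (induction j)
  case 0 then show ?case using Fs_mono[of 0 k] by auto
next
  case (Suc j)
  show ?case
  proof (cases "q \<in> Fs j")
    case True then show ?thesis using Suc by blast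
  next
    case False
    then have q: "q = nxt (Fs j)" using Suc by simp
    show ?thesis
    proof (cases "j < k")
      case True
      then have "Fs (Suc j) \<subseteq> Fs k" by (intro Fs_mono) simp
      then show ?thesis using q by auto
    next
      case False
      then have "k = j \<or> k < j" by linarith
      then show ?thesis using q nxt_mono[of k j] by auto
    qed
  qed
qed

lemma Q_split: "q \<in> Q \<Longrightarrow> q \<in> Fs k \<or> nxt (Fs k) \<le> q"
  unfolding Q_def using Fs_split by blast

lemma Fs_le_Max: "q \<in> Fs k \<Longrightarrow> q \<le> Max (Fs k)" using Fs_fin by simp

lemma Q_below_nxt: "Q \<inter> {..<nxt (Fs k)} \<subseteq> Fs k" using Q_split[of _ k] by fastforce

lemma Q_below_bsc: "Q \<inter> {..<bsc (Fs k)} \<subseteq> Fs k" "bsc (Fs k) \<notin> Q"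
proof -
  have b: "bsc (Fs k) < nxt (Fs k)" "Max (Fs k) < bsc (Fs k)" using bsc_prop[OF Fs_fin[of k]] nxt_prop[OF Fs_fin[of k]] by auto
  show "Q \<inter> {..<bsc (Fs k)} \<subseteq> Fs k" using Q_split[of _ k] b by fastforce
  show "bsc (Fs k) \<notin> Q"
  proof
    assume "bsc (Fs k) \<in> Q"
    then have "bsc (Fs k) \<in> Fs k \<or> nxt (Fs k) \<le> bsc (Fs k)" by (rule Q_split)
    then show False using b Fs_le_Max[of "bsc (Fs k)" k] by auto
  qed
qed

lemma nxt_in_Q: "nxt (Fs k) \<in> Q" unfolding Q_def by (rule UN_I[of "Suc k"]) auto

lemma S_inf: "infinite S"
proof -
  have "inj (\<lambda>k. nxt (Fs k))" by (intro injI) (metis linorder_neqE_nat nxt_mono order_less_irrefl)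
  then show ?thesis unfolding S_def using finite_imageD infinite_UNIV_nat by blast
qed

definition HH :: "(nat set \<times> nat set set) set" where "HH = Hc r c Q"

lemma H_n_eq: "H_n HH n = {E. E \<subseteq> Kr n \<and> (\<forall>X. X \<subseteq> {1..n} \<longrightarrow> card X \<in> Q \<longrightarrow> real (card {e\<in>E. e \<subseteq> X}) \<le> c * real (card X))}"
  unfolding H_n_def HH_def Hc_def uniform_hg_def Kr_def by auto

lemma H_n_fin: "finite (H_n HH n)"
  unfolding H_n_eq by (rule finite_subset[of _ "Pow (Kr n)"]) (use Kr_fin in auto)

lemma Good_sub:
  assumes "Q \<inter> {..<n} \<subseteq> F" and "n \<in> Q \<Longrightarrow> real M \<le> c * real n"
  shows "Good n F M \<subseteq> H_n HH n"
proof
  fix E assume E: "E \<in> Good n F M"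
  then have EK: "E \<subseteq> Kr n" and cE: "card E = M"
    and con: "\<And>X. X \<subseteq> {1..n} \<Longrightarrow> card X \<in> F \<Longrightarrow> real (card {e\<in>E. e \<subseteq> X}) \<le> c * real (card X)"
    unfolding Good_def by auto
  have "real (card {e\<in>E. e \<subseteq> X}) \<le> c * real (card X)" if X: "X \<subseteq> {1..n}" "card X \<in> Q" for X
  proof -
    have cX: "card X \<le> n" using card_mono[OF _ X(1)] by simp
    show ?thesis
    proof (cases "card X < n")
      case True
      then have "card X \<in> F" using assms(1) X(2) by auto
      then show ?thesis using con X(1) by blast
    next
      case False
      then have "card X = n" using cX by simp
      then have "X = {1..n}" using X(1) by (intro card_subset_eq) auto
      then have "{e\<in>E. e \<subseteq> X} = E" using EK unfolding Kr_def by auto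
      then show ?thesis using assms(2) X(2) \<open>card X = n\<close> cE by simp
    qed
  qed
  then show "E \<in> H_n HH n" unfolding H_n_eq using EK by auto
qed

lemma upper_count:
  assumes "n \<in> Q" "1 \<le> Mm n" "Mm n \<le> n choose r"
  shows "real (card (H_n HH n)) \<le> (exp 1 * real (n choose r) / real (Mm n)) ^ Mm n"
proof -
  have sub: "H_n HH n \<subseteq> (\<Union>j\<in>{..Mm n}. {E. E \<subseteq> Kr n \<and> card E = j})"
  proof
    fix E assume "E \<in> H_n HH n"
    then have EK: "E \<subseteq> Kr n" and con: "real (card {e\<in>E. e \<subseteq> {1..n}}) \<le> c * real (card {1..n})"
      unfolding H_n_eq using assms(1) by auto
    have "{e\<in>E. e \<subseteq> {1..n}} = E" using EK unfolding Kr_def by auto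
    then have "real (card E) \<le> c * real n" using con by simp
    then have "card E \<le> Mm n" unfolding Mm_def by (rule le_nat_floor)
    then show "E \<in> (\<Union>j\<in>{..Mm n}. {E. E \<subseteq> Kr n \<and> card E = j})" using EK by auto
  qed
  have "card (H_n HH n) \<le> card (\<Union>j\<in>{..Mm n}. {E. E \<subseteq> Kr n \<and> card E = j})"
    by (rule card_mono[OF _ sub]) (auto intro: finite_subset[of _ "Pow (Kr n)"] simp: Kr_fin)
  also have "\<dots> \<le> (\<Sum>j\<le>Mm n. card {E. E \<subseteq> Kr n \<and> card E = j})" by (rule card_UN_le) simp
  also have "\<dots> = (\<Sum>j\<le>Mm n. (n choose r) choose j)" using n_subsets[OF Kr_fin] Kr_card by simp
  finally have "real (card (H_n HH n)) \<le> real (\<Sum>j\<le>Mm n. (n choose r) choose j)" by (simp only: of_nat_le_iff)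
  also have "\<dots> \<le> (exp 1 * real (n choose r) / real (Mm n)) ^ Mm n" by (rule upper_sum[OF assms(2,3)])
  finally show ?thesis .
qed

end

context sp begin

definition A0 where "A0 = ln (2 * exp 1 / c)"
definition B0 where "B0 = ln (c * real r ^ r)"
definition K0 where "K0 = (c * \<bar>A0\<bar> + c * \<bar>B0\<bar> + (real r - 1) + \<bar>B0\<bar> + 1) / (real r - 1)"

lemma asym_core:
  fixes n M N :: nat and G :: real
  assumes n2: "n \<ge> 2" and M1: "1 \<le> M" and MN: "M \<le> N" and Mc: "real M \<le> c * real n"
    and Mc2: "real M \<ge> c * real n / 2" and Mc1: "real M \<ge> c * real n - 1"
    and NU: "real N \<le> real n ^ r" and NL: "real N \<ge> (real n / real r) ^ r"
    and GL: "G \<ge> real (N choose M) / 2" and GU: "G \<le> (exp 1 * real N / real M) ^ M"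
    and lB: "(real r - 1) * ln (real n) \<ge> B0"
  shows "G > 0 \<and> \<bar>ln G / ((real r - 1) * real n * ln (real n)) - c\<bar> \<le> K0 / ln (real n)"
proof -
  define a where "a = real r - 1"
  define l where "l = ln (real n)"
  have a0: "a > 0" unfolding a_def using r2 by simp
  have ar: "real (r - 1) = a" unfolding a_def using r2 by simp
  have n0: "real n > 0" using n2 by simp
  have l0: "l > 0" unfolding l_def using n2 by simp
  have ln_le: "l \<le> real n" unfolding l_def using ln_le_minus_one[OF n0] by linarith
  have rpos: "real r > 0" using r2 by simp
  have M0: "real M > 0" using M1 by simp
  have N0: "real N > 0" using M1 MN by simp
  have pw: "real n ^ r = real n * real n ^ (r - 1)"
  proof -
    have "r = Suc (r - 1)" using r2 by simp
    then show ?thesis by (metis power_Suc)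
  qed
  have pr: "ln (real n ^ (r - 1)) = a * l" unfolding l_def using n0 ar by (simp add: ln_realpow)
  have cNM: "real (N choose M) \<ge> (real N / real M) ^ M" using binomial_ge_n_over_k_pow_k[OF MN] by simp
  have q0: "real N / real M > 0" using N0 M0 by simp
  have Gpos: "G > 0"
  proof -
    have "(real N / real M) ^ M > 0" using q0 by simp
    then show ?thesis using GL cNM by linarith
  qed
  have lnGL: "ln G \<ge> real M * ln (real N / real M) - ln 2"
  proof -
    have "(real N / real M) ^ M / 2 \<le> G" using GL cNM by linarith
    then have "ln ((real N / real M) ^ M / 2) \<le> ln G" using q0 Gpos by (subst ln_le_cancel_iff) auto
    moreover have "ln ((real N / real M) ^ M / 2) = real M * ln (real N / real M) - ln 2"
      using q0 M0 N0 by (simp add: ln_div ln_realpow)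
    ultimately show ?thesis by simp
  qed
  have NMl: "real N / real M \<ge> real n ^ (r - 1) / (c * real r ^ r)"
  proof -
    have "real n ^ (r - 1) / (c * real r ^ r) = (real n / real r) ^ r / (c * real n)"
      using pw n0 c_pos rpos by (simp add: power_divide field_simps)
    also have "\<dots> \<le> real N / (c * real n)" using NL c_pos n0 by (simp add: divide_right_mono)
    also have "\<dots> \<le> real N / real M" using Mc M0 N0 by (intro divide_left_mono) auto
    finally show ?thesis .
  qed
  have lnNM: "ln (real N / real M) \<ge> a * l - B0"
  proof -
    have p: "real n ^ (r - 1) / (c * real r ^ r) > 0" using n0 c_pos rpos by simp
    have "ln (real n ^ (r - 1) / (c * real r ^ r)) \<le> ln (real N / real M)"
      using NMl p q0 by (subst ln_le_cancel_iff) auto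
    moreover have "ln (real n ^ (r - 1) / (c * real r ^ r)) = a * l - B0"
      unfolding B0_def using n0 c_pos rpos pr by (simp add: ln_div)
    ultimately show ?thesis by simp
  qed
  have alB: "a * l - B0 \<ge> 0" using lB unfolding a_def l_def by simp
  have "real M * ln (real N / real M) \<ge> real M * (a * l - B0)" using lnNM M0 by (intro mult_left_mono) auto
  moreover have "real M * (a * l - B0) \<ge> (c * real n - 1) * (a * l - B0)" using Mc1 alB by (intro mult_right_mono) auto
  ultimately have "ln G \<ge> (c * real n - 1) * (a * l - B0) - ln 2" using lnGL by linarith
  moreover have "(c * real n - 1) * (a * l - B0) - ln 2 \<ge> a * c * real n * l - (c * \<bar>B0\<bar> + a + \<bar>B0\<bar> + 1) * real n"
  proof -
    have e: "(c * real n - 1) * (a * l - B0) - ln 2 = a * c * real n * l - c * real n * B0 - a * l + B0 - ln 2"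
      by (simp add: algebra_simps)
    have t1: "c * real n * B0 \<le> c * \<bar>B0\<bar> * real n"
    proof -
      have "(c * real n) * B0 \<le> (c * real n) * \<bar>B0\<bar>" using c_pos n0 by (intro mult_left_mono) auto
      then show ?thesis by (simp add: mult_ac)
    qed
    have t2: "a * l \<le> a * real n" using ln_le a0 by simp
    have t3: "- B0 \<le> \<bar>B0\<bar> * real n"
    proof -
      have "\<bar>B0\<bar> * 1 \<le> \<bar>B0\<bar> * real n" using n2 by (intro mult_left_mono) auto
      then show ?thesis by linarith
    qed
    have t4: "ln 2 \<le> real n" using ln_le_minus_one[of 2] n2 by simp
    show ?thesis unfolding e using t1 t2 t3 t4 by (simp add: algebra_simps)
  qed
  ultimately have lowG: "ln G \<ge> a * c * real n * l - (c * \<bar>B0\<bar> + a + \<bar>B0\<bar> + 1) * real n" by linarith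
  have x0: "exp 1 * real N / real M > 0" using N0 M0 by simp
  have lnGU: "ln G \<le> real M * ln (exp 1 * real N / real M)"
  proof -
    have "ln G \<le> ln ((exp 1 * real N / real M) ^ M)" using Gpos x0 GU by (subst ln_le_cancel_iff) auto
    then show ?thesis using x0 by (simp add: ln_realpow)
  qed
  have x1: "exp 1 * real N / real M \<ge> 1"
  proof -
    have "real N / real M \<ge> 1" using MN M0 by simp
    moreover have "exp 1 \<ge> (1::real)" by simp
    ultimately have "exp 1 * (real N / real M) \<ge> 1 * 1" by (intro mult_mono) auto
    then show ?thesis by simp
  qed
  have lnx0: "ln (exp 1 * real N / real M) \<ge> 0" using x1 by simp
  have xu: "exp 1 * real N / real M \<le> (2 * exp 1 / c) * real n ^ (r - 1)"
  proof -
    have "exp 1 * real N / real M \<le> exp 1 * (real n * real n ^ (r - 1)) / real M"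
      using NU pw M0 by (intro divide_right_mono) auto
    also have "\<dots> \<le> exp 1 * (real n * real n ^ (r - 1)) / (c * real n / 2)"
      using Mc2 c_pos n0 M0 by (intro divide_left_mono) auto
    also have "\<dots> = (2 * exp 1 / c) * real n ^ (r - 1)" using n0 c_pos by (simp add: field_simps)
    finally show ?thesis .
  qed
  have lnxu: "ln (exp 1 * real N / real M) \<le> A0 + a * l"
  proof -
    have p: "(2 * exp 1 / c) * real n ^ (r - 1) > 0" using c_pos n0 by simp
    have "ln (exp 1 * real N / real M) \<le> ln ((2 * exp 1 / c) * real n ^ (r - 1))"
      using xu x0 p by (subst ln_le_cancel_iff) auto
    also have "\<dots> = ln (2 * exp 1 / c) + ln (real n ^ (r - 1))" using c_pos n0 by (intro ln_mult_pos) auto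
    also have "\<dots> = A0 + a * l" unfolding A0_def pr ..
    finally show ?thesis .
  qed
  have "real M * ln (exp 1 * real N / real M) \<le> c * real n * ln (exp 1 * real N / real M)"
    using Mc lnx0 by (rule mult_right_mono)
  then have "ln G \<le> c * real n * ln (exp 1 * real N / real M)" using lnGU by linarith
  also have "\<dots> \<le> c * real n * (A0 + a * l)" using lnxu c_pos n0 by (intro mult_left_mono) auto
  also have "\<dots> \<le> a * c * real n * l + c * \<bar>A0\<bar> * real n"
  proof -
    have "c * real n * A0 \<le> c * real n * \<bar>A0\<bar>" using c_pos n0 by (intro mult_left_mono) auto
    then show ?thesis by (simp add: algebra_simps)
  qed
  finally have upG: "ln G \<le> a * c * real n * l + c * \<bar>A0\<bar> * real n" .
  define D where "D = a * real n * l"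
  have D0: "D > 0" unfolding D_def using a0 n0 l0 by simp
  have "ln G / D - c \<le> c * \<bar>A0\<bar> / (a * l)"
  proof -
    have "ln G / D \<le> (a * c * real n * l + c * \<bar>A0\<bar> * real n) / D" using upG D0 by (simp add: divide_right_mono)
    also have "\<dots> = c + c * \<bar>A0\<bar> / (a * l)" unfolding D_def using a0 n0 l0 by (simp add: field_simps)
    finally show ?thesis by simp
  qed
  moreover have "ln G / D - c \<ge> - ((c * \<bar>B0\<bar> + a + \<bar>B0\<bar> + 1) / (a * l))"
  proof -
    have "(a * c * real n * l - (c * \<bar>B0\<bar> + a + \<bar>B0\<bar> + 1) * real n) / D \<le> ln G / D"
      using lowG D0 by (simp add: divide_right_mono)
    moreover have "(a * c * real n * l - (c * \<bar>B0\<bar> + a + \<bar>B0\<bar> + 1) * real n) / D = c - (c * \<bar>B0\<bar> + a + \<bar>B0\<bar> + 1) / (a * l)"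
      unfolding D_def using a0 n0 l0 by (simp add: field_simps)
    ultimately show ?thesis by simp
  qed
  moreover have "c * \<bar>A0\<bar> / (a * l) \<le> K0 / l"
    unfolding K0_def a_def[symmetric] using a0 l0 c_pos by (simp add: field_simps)
  moreover have "(c * \<bar>B0\<bar> + a + \<bar>B0\<bar> + 1) / (a * l) \<le> K0 / l"
    unfolding K0_def a_def[symmetric] using a0 l0 c_pos by (simp add: field_simps)
  ultimately have "\<bar>ln G / D - c\<bar> \<le> K0 / l" by linarith
  then show ?thesis using Gpos unfolding D_def a_def l_def by simp
qed

end

context sp begin

lemma S_bounds:
  assumes "n \<in> S"
  shows "r \<le> n \<and> 1 \<le> Mm n \<and> Mm n \<le> n choose r \<and>
    real (card (H_n HH n)) \<ge> real ((n choose r) choose Mm n) / 2 \<and>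
    real (card (H_n HH n)) \<le> (exp 1 * real (n choose r) / real (Mm n)) ^ Mm n"
proof -
  obtain k where n: "n = nxt (Fs k)" using assms unfolding S_def by auto
  have P: "Pm (Fs k) n" using nxt_prop[OF Fs_fin[of k]] n by simp
  then have r: "r \<le> n" "1 \<le> Mm n" "Mm n \<le> n choose r" "badsum (Fs k) n (Mm n) \<le> 1/2"
    unfolding Pm_def by auto
  have "Good n (Fs k) (Mm n) \<subseteq> H_n HH n"
    using Q_below_nxt[of k] Mm_le[of n] n by (intro Good_sub) auto
  then have "card (Good n (Fs k) (Mm n)) \<le> card (H_n HH n)" using H_n_fin by (rule card_mono[rotated])
  moreover have "real (card (Good n (Fs k) (Mm n))) \<ge> real ((n choose r) choose Mm n) / 2"
    using good_count[OF Fs_fin r(2,3,4)] .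
  ultimately have low: "real (card (H_n HH n)) \<ge> real ((n choose r) choose Mm n) / 2" by linarith
  have up: "real (card (H_n HH n)) \<le> (exp 1 * real (n choose r) / real (Mm n)) ^ Mm n"
    using upper_count[OF _ r(2,3)] nxt_in_Q n by simp
  show ?thesis using r low up by simp
qed

lemma ev_ln_ge: "\<forall>\<^sub>F n in sequentially. ln (real n) \<ge> T"
proof -
  have "filterlim (\<lambda>n. ln (real n)) at_top sequentially"
    by (rule filterlim_compose[OF ln_at_top filterlim_real_sequentially])
  then show ?thesis unfolding filterlim_at_top by blast
qed

lemma main_asym:
  "\<exists>g :: nat \<Rightarrow> real. (g \<longlongrightarrow> 0) (inf sequentially (principal S)) \<and>
        (\<forall>\<^sub>F n in inf sequentially (principal S).
           real (card (H_n HH n)) = real n powr ((real r - 1) * (c + g n) * real n))"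
proof -
  define g where "g n = ln (real (card (H_n HH n))) / ((real r - 1) * real n * ln (real n)) - c" for n
  have a0: "real r - 1 > 0" using r2 by simp
  have ev1: "\<forall>\<^sub>F n in sequentially. n \<ge> 2" by (rule eventually_ge_at_top)
  have ev2: "\<forall>\<^sub>F n in sequentially. real n \<ge> 2 / c" by (rule ev_real_ge)
  have ev3: "\<forall>\<^sub>F n in sequentially. ln (real n) \<ge> B0 / (real r - 1)" by (rule ev_ln_ge)
  have key: "\<forall>\<^sub>F n in sequentially. n \<in> S \<longrightarrow> real (card (H_n HH n)) > 0 \<and> \<bar>g n\<bar> \<le> K0 / ln (real n)"
    using ev1 ev2 ev3
  proof eventually_elim
    case (elim n)
    show ?case
    proof
      assume nS: "n \<in> S"
      note b = S_bounds[OF nS]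
      have n0: "real n > 0" using elim by simp
      have cn2: "c * real n \<ge> 2" using elim(2) c_pos by (simp add: field_simps)
      have cn0: "c * real n \<ge> 0" using cn2 by simp
      have Mc1: "real (Mm n) \<ge> c * real n - 1"
      proof -
        have "real (Mm n) = real_of_int \<lfloor>c * real n\<rfloor>" unfolding Mm_def using cn0 by simp
        moreover have "c * real n < real_of_int \<lfloor>c * real n\<rfloor> + 1" by (rule real_of_int_floor_add_one_gt)
        ultimately show ?thesis by linarith
      qed
      have Mc2: "real (Mm n) \<ge> c * real n / 2" using Mc1 cn2 by linarith
      have "n choose r \<le> n ^ r" by (rule binomial_le_pow) (use b in simp)
      then have "real (n choose r) \<le> real (n ^ r)" by (simp only: of_nat_le_iff)
      then have NU: "real (n choose r) \<le> real n ^ r" by simp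
      have NL: "real (n choose r) \<ge> (real n / real r) ^ r" using binomial_ge_n_over_k_pow_k[of r n] b by simp
      have lB: "(real r - 1) * ln (real n) \<ge> B0" using elim(3) a0 by (simp add: field_simps)
      have "real (card (H_n HH n)) > 0 \<and>
          \<bar>ln (real (card (H_n HH n))) / ((real r - 1) * real n * ln (real n)) - c\<bar> \<le> K0 / ln (real n)"
        using b Mm_le[of n] Mc1 Mc2 NU NL lB elim(1) by (intro asym_core) auto
      then show "real (card (H_n HH n)) > 0 \<and> \<bar>g n\<bar> \<le> K0 / ln (real n)" unfolding g_def by simp
    qed
  qed
  have lim0: "((\<lambda>n. K0 / ln (real n)) \<longlongrightarrow> 0) sequentially"
  proof -
    have "((\<lambda>n. inverse (ln (real n))) \<longlongrightarrow> 0) sequentially"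
      by (rule tendsto_inverse_0_at_top[OF filterlim_compose[OF ln_at_top filterlim_real_sequentially]])
    then have "((\<lambda>n. K0 * inverse (ln (real n))) \<longlongrightarrow> K0 * 0) sequentially" by (intro tendsto_mult tendsto_const)
    then show ?thesis by (simp add: divide_inverse)
  qed
  let ?F = "inf sequentially (principal S)"
  have keyF: "\<forall>\<^sub>F n in ?F. real (card (H_n HH n)) > 0 \<and> \<bar>g n\<bar> \<le> K0 / ln (real n)"
    using key by (simp add: eventually_inf_principal)
  have limF: "((\<lambda>n. K0 / ln (real n)) \<longlongrightarrow> 0) ?F" by (rule tendsto_mono[OF inf_le1 lim0])
  have limF': "((\<lambda>n. - (K0 / ln (real n))) \<longlongrightarrow> 0) ?F" using tendsto_minus[OF limF] by simp
  have gl: "(g \<longlongrightarrow> 0) ?F"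
  proof (rule tendsto_sandwich[OF _ _ limF' limF])
    show "\<forall>\<^sub>F n in ?F. - (K0 / ln (real n)) \<le> g n" using keyF by (rule eventually_mono) auto
    show "\<forall>\<^sub>F n in ?F. g n \<le> K0 / ln (real n)" using keyF by (rule eventually_mono) auto
  qed
  have evF2: "\<forall>\<^sub>F n in ?F. n \<ge> 2" using ev1 by (rule filter_leD[OF inf_le1])
  have eq: "\<forall>\<^sub>F n in ?F. real (card (H_n HH n)) = real n powr ((real r - 1) * (c + g n) * real n)"
    using keyF evF2
  proof eventually_elim
    case (elim n)
    define G where "G = real (card (H_n HH n))"
    have G0: "G > 0" using elim unfolding G_def by simp
    have l0: "ln (real n) > 0" using elim by simp
    have n0: "real n > 0" using elim by simp
    have "(real r - 1) * (c + g n) * real n = ln G / ln (real n)"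
      unfolding g_def G_def[symmetric] using a0 l0 n0 by (simp add: field_simps)
    then have "real n powr ((real r - 1) * (c + g n) * real n) = exp (ln G / ln (real n) * ln (real n))"
      using n0 by (simp add: powr_def)
    also have "\<dots> = G" using l0 G0 by simp
    finally show ?case unfolding G_def by simp
  qed
  show ?thesis using gl eq by blast
qed

lemma nxt_ge: "nxt (Fs k) \<ge> k"
proof (induction k)
  case 0 then show ?case by simp
next
  case (Suc k) then show ?case using nxt_mono[of k "Suc k"] by simp
qed

lemma main_freq:
  "\<exists>\<^sub>F n in sequentially. n \<ge> 1 \<and> real (card (H_n HH n)) \<ge> 2 powr (real n powr (real r - \<epsilon>))"
  unfolding frequently_sequentially
proof
  fix K
  define k where "k = Suc K"
  define b where "b = bsc (Fs k)"
  have bk: "Max (Fs k) < b" "Pb (Fs k) b" using bsc_prop[OF Fs_fin[of k]] unfolding b_def by auto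
  have "nxt (Fs K) \<le> Max (Fs k)" unfolding k_def using Max_Fs_Suc[of K] by simp
  then have bK: "b \<ge> K" using nxt_ge[of K] bk by linarith
  have r: "r \<le> b" "1 \<le> Mb b" "4 * Mb b \<le> b choose r" "badsum (Fs k) b (Mb b) \<le> 1/2"
    using bk(2) unfolding Pb_def by auto
  define M where "M = Mb b"
  define N where "N = b choose r"
  have "Good b (Fs k) (Mb b) \<subseteq> H_n HH b"
    using Q_below_bsc[of k] unfolding b_def by (intro Good_sub) auto
  then have "card (Good b (Fs k) (Mb b)) \<le> card (H_n HH b)" using H_n_fin by (rule card_mono[rotated])
  moreover have "real (card (Good b (Fs k) (Mb b))) \<ge> real ((b choose r) choose Mb b) / 2"
    using good_count[OF Fs_fin r(2) _ r(4)] r(3) by simp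
  ultimately have low: "real (card (H_n HH b)) \<ge> real (N choose M) / 2" unfolding M_def N_def by linarith
  have M0: "real M > 0" using r unfolding M_def by simp
  have MN: "M \<le> N" using r unfolding M_def N_def by simp
  have "real (N choose M) \<ge> (real N / real M) ^ M" using binomial_ge_n_over_k_pow_k[OF MN] by simp
  moreover have "(real N / real M) ^ M \<ge> 4 ^ M"
  proof -
    have "real (4 * M) \<le> real N" using r unfolding M_def N_def by (simp only: of_nat_le_iff)
    then have "4 * real M \<le> real N" by simp
    then have "4 \<le> real N / real M" using M0 by (simp add: field_simps)
    then show ?thesis by (intro power_mono) auto
  qed
  moreover have "(4::real) ^ M / 2 \<ge> 2 ^ M"
  proof -
    have "(2::real) ^ 1 \<le> 2 ^ M" by (rule power_increasing) (use r in \<open>auto simp: M_def\<close>)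
    then have x2: "(2::real) ^ M \<ge> 2" by simp
    have "(4::real) ^ M = (2 * 2) ^ M" by simp
    also have "\<dots> = 2 ^ M * 2 ^ M" by (rule power_mult_distrib)
    finally have e4: "(4::real) ^ M = 2 ^ M * 2 ^ M" .
    have "2 ^ M * 2 \<le> (2::real) ^ M * 2 ^ M" using x2 by (intro mult_left_mono) auto
    then show ?thesis unfolding e4 by simp
  qed
  ultimately have c1: "real (card (H_n HH b)) \<ge> 2 ^ M" using low by linarith
  have "real b powr (real r - \<epsilon>) \<le> real M" unfolding M_def Mb_def by (rule of_nat_ceiling)
  then have "2 powr (real b powr (real r - \<epsilon>)) \<le> 2 powr real M" by (rule powr_mono) auto
  also have "\<dots> = 2 ^ M" by (simp add: powr_realpow)
  finally have "real (card (H_n HH b)) \<ge> 2 powr (real b powr (real r - \<epsilon>))" using c1 by linarith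
  moreover have "b \<ge> 1" using r r2 by simp
  ultimately show "\<exists>n\<ge>K. n \<ge> 1 \<and> real (card (H_n HH n)) \<ge> 2 powr (real n powr (real r - \<epsilon>))"
    using bK by blast
qed

end

theorem theorem1p5:
  fixes r :: nat and c \<epsilon> :: real
  assumes "r \<ge> 2" and "c \<ge> 1 / (real r - 1)" and "\<epsilon> > 1 / c"
  shows "\<exists>H S. hereditary_property r H \<and> infinite S \<and>
     (\<exists>g :: nat \<Rightarrow> real. (g \<longlongrightarrow> 0) (inf sequentially (principal S)) \<and>
        (\<forall>\<^sub>F n in inf sequentially (principal S).
           real (card (H_n H n)) = real n powr ((real r - 1) * (c + g n) * real n))) \<and>
     (\<exists>\<^sub>F n in sequentially. real (card (H_n H n)) \<ge> 2 powr (real n powr (real r - \<epsilon>)))"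
proof -
  define \<epsilon>' where "\<epsilon>' = min \<epsilon> (real r)"
  have a0: "real r - 1 > 0" using assms(1) by simp
  have c0: "c > 0" using assms(2) a0 by (meson divide_pos_pos less_le_trans zero_less_one)
  have "1 / c \<le> real r - 1" using assms(2) a0 c0 by (simp add: field_simps)
  then have "1 / c < real r" by simp
  then have e': "\<epsilon>' > 1 / c" using assms(3) unfolding \<epsilon>'_def by simp
  interpret sp r c \<epsilon>'
    by unfold_locales (use assms e' in \<open>auto simp: \<epsilon>'_def\<close>)
  have fr: "\<exists>\<^sub>F n in sequentially. real (card (H_n HH n)) \<ge> 2 powr (real n powr (real r - \<epsilon>))"
    using main_freq
  proof (rule frequently_elim1)
    fix n assume n: "n \<ge> 1 \<and> real (card (H_n HH n)) \<ge> 2 powr (real n powr (real r - \<epsilon>'))"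
    have "real n powr (real r - \<epsilon>) \<le> real n powr (real r - \<epsilon>')"
      using n unfolding \<epsilon>'_def by (intro powr_mono) auto
    then have "2 powr (real n powr (real r - \<epsilon>)) \<le> 2 powr (real n powr (real r - \<epsilon>'))"
      by (rule powr_mono) auto
    then show "real (card (H_n HH n)) \<ge> 2 powr (real n powr (real r - \<epsilon>))" using n by linarith
  qed
  show ?thesis
    using Hc_hereditary[of r c Q] S_inf main_asym fr unfolding HH_def by blast
qed


end
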